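(* Let $\tilde{A}\in\mathbb{Q}^{q\times n}$, $\tilde{b}\in\mathbb{Q}^{q}$ be the constraint data of the LP relaxation $P=\{x\in\mathbb{R}^n: \tilde{A}x\ge \tilde{b}\}=\{x: Ax\ge b,\ x\ge 0,\ x_j\le 1,\ j=1,\dots,p\}$ (with $A$ an $m\times n$ matrix, $q=m+n+p$, $Q=\{1,\dots,q\}$), and let $T$ be a finite index set with matrices $D^t\in\mathbb{Q}^{r\times n}$ and vectors $d_0^t\in\mathbb{Q}^r$ for $t\in T$. Let $\bar{w}=(\bar{\alpha},\bar{\beta},\{\bar{u}^t,\bar{v}^t\}_{t\in T})$ be a basic feasible solution of the CGLP system (described in the context). Let $N=N(\bar{u}):=\{j\in Q: \bar{u}^t_j>0 \text{ for some } t\in T\}$ and let $\tilde{A}_N$ be the $|N|\times n$ submatrix of $\tilde{A}$ formed by the rows indexed by $N$. Then $\bar{w}$ is regular if and only if $\tilde{A}_N$ has full row rank, i.e. $\operatorname{rank}(\tilde{A}_N)=|N|$.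
   Context: The CGLP system consists of the variables $\alpha\in\mathbb{R}^n$, $\beta\in\mathbb{R}$, $u^t\in\mathbb{R}^q$, $v^t\in\mathbb{R}^r$ ($t\in T$, row vectors) and the constraints: $\alpha-u^t\tilde{A}-v^tD^t=0$ for all $t\in T$; $\beta-u^t\tilde{b}-v^td_0^t=0$ for all $t\in T$; $\sum_{t\in T}\sum_{i=1}^q u^t_i+\sum_{t\in T}\sum_{i=1}^r v^t_i=1$; $u^t\ge 0$, $v^t\ge 0$ for all $t\in T$. (These describe valid inequalities $\alpha x\ge\beta$ for the disjunctive set $\bigvee_{t\in T}\{x:\tilde{A}x\ge\tilde{b},\ D^tx\ge d_0^t\}$.) Note that the rows of $\tilde{A}$ include the $n$ rows of the identity matrix $I_n$ (from $x\ge 0$). A feasible basic solution $(\alpha,\beta,\{u^t,v^t\}_{t\in T})$ of this system is called regular if there exists a set $J\subseteq Q$ with $|J|=n$ such that the $n\times n$ submatrix $\tilde{A}_J$ (rows indexed by $J$) is nonsingular and $u^t_j=0$ for all $j\notin J$ and all $t\in T$; otherwise it is called irregular. *)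

theory Defs
  imports "Jordan_Normal_Form.DL_Rank" "Jordan_Normal_Form.DL_Submatrix" "Jordan_Normal_Form.Determinant"
begin

text \<open>Indices are 0-based. The LP relaxation P = {x : A x >= b, x >= 0, x_j <= 1 (j < p)}
  is written as {x : tA x >= tb} with q = m + n + p rows:
  rows 0..m-1 are A, rows m..m+n-1 are the identity I_n (x >= 0),
  rows m+n..m+n+p-1 are -e_j (j < p), i.e. -x_j >= -1.\<close>

definition tildeA :: "nat \<Rightarrow> nat \<Rightarrow> nat \<Rightarrow> real mat \<Rightarrow> real mat" where
  "tildeA m n p A = mat (m + n + p) n (\<lambda>(i, j).
      if i < m then A $$ (i, j)
      else if i < m + n then (if i - m = j then 1 else 0)
      else (if i - m - n = j then -1 else 0))"

definition tildeb :: "nat \<Rightarrow> nat \<Rightarrow> nat \<Rightarrow> real vec \<Rightarrow> real vec" where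
  "tildeb m n p b = vec (m + n + p) (\<lambda>i.
      if i < m then b $ i else if i < m + n then 0 else -1)"

text \<open>Feasibility in the CGLP system. Row vectors u^t, v^t are column vectors here;
  u^t tA is written transpose tA *v u^t.\<close>

definition cglp_feasible ::
  "real mat \<Rightarrow> real vec \<Rightarrow> 't set \<Rightarrow> nat \<Rightarrow> ('t \<Rightarrow> real mat) \<Rightarrow> ('t \<Rightarrow> real vec)
   \<Rightarrow> real vec \<Rightarrow> real \<Rightarrow> ('t \<Rightarrow> real vec) \<Rightarrow> ('t \<Rightarrow> real vec) \<Rightarrow> bool" where
  "cglp_feasible tA tb T r D d0 \<alpha> \<beta> u v \<longleftrightarrow>
     \<alpha> \<in> carrier_vec (dim_col tA) \<and>
     (\<forall>t\<in>T. u t \<in> carrier_vec (dim_row tA) \<and> v t \<in> carrier_vec r) \<and>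
     (\<forall>t\<in>T. \<alpha> = transpose_mat tA *\<^sub>v u t + transpose_mat (D t) *\<^sub>v v t) \<and>
     (\<forall>t\<in>T. \<beta> = u t \<bullet> tb + v t \<bullet> d0 t) \<and>
     (\<Sum>t\<in>T. \<Sum>i<dim_row tA. u t $ i) + (\<Sum>t\<in>T. \<Sum>i<r. v t $ i) = 1 \<and>
     (\<forall>t\<in>T. (\<forall>i<dim_row tA. u t $ i \<ge> 0) \<and> (\<forall>i<r. v t $ i \<ge> 0))"

text \<open>Basic solution: the constraints active at the point (all equality constraints together
  with the nonnegativity constraints u^t_i >= 0, v^t_i >= 0 that hold with equality) have
  rank equal to the number of variables, i.e. the homogeneous active system has only the
  trivial solution.\<close>

definition cglp_basic ::
  "real mat \<Rightarrow> real vec \<Rightarrow> 't set \<Rightarrow> nat \<Rightarrow> ('t \<Rightarrow> real mat) \<Rightarrow> ('t \<Rightarrow> real vec)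
   \<Rightarrow> real vec \<Rightarrow> real \<Rightarrow> ('t \<Rightarrow> real vec) \<Rightarrow> ('t \<Rightarrow> real vec) \<Rightarrow> bool" where
  "cglp_basic tA tb T r D d0 \<alpha> \<beta> u v \<longleftrightarrow>
     (\<forall>da db du dv.
        da \<in> carrier_vec (dim_col tA) \<and>
        (\<forall>t\<in>T. du t \<in> carrier_vec (dim_row tA) \<and> dv t \<in> carrier_vec r) \<and>
        (\<forall>t\<in>T. da = transpose_mat tA *\<^sub>v du t + transpose_mat (D t) *\<^sub>v dv t) \<and>
        (\<forall>t\<in>T. db = du t \<bullet> tb + dv t \<bullet> d0 t) \<and>
        (\<Sum>t\<in>T. \<Sum>i<dim_row tA. du t $ i) + (\<Sum>t\<in>T. \<Sum>i<r. dv t $ i) = 0 \<and>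
        (\<forall>t\<in>T. (\<forall>i<dim_row tA. u t $ i = 0 \<longrightarrow> du t $ i = 0) \<and>
                 (\<forall>i<r. v t $ i = 0 \<longrightarrow> dv t $ i = 0))
      \<longrightarrow> da = 0\<^sub>v (dim_col tA) \<and> db = 0 \<and>
          (\<forall>t\<in>T. du t = 0\<^sub>v (dim_row tA) \<and> dv t = 0\<^sub>v r))"

definition cglp_regular :: "real mat \<Rightarrow> 't set \<Rightarrow> ('t \<Rightarrow> real vec) \<Rightarrow> bool" where
  "cglp_regular tA T u \<longleftrightarrow>
     (\<exists>J. J \<subseteq> {..<dim_row tA} \<and> card J = dim_col tA \<and>
          det (submatrix tA J UNIV) \<noteq> 0 \<and>
          (\<forall>t\<in>T. \<forall>j<dim_row tA. j \<notin> J \<longrightarrow> u t $ j = 0))"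

definition Nset :: "nat \<Rightarrow> 't set \<Rightarrow> ('t \<Rightarrow> real vec) \<Rightarrow> nat set" where
  "Nset q T u = {j. j < q \<and> (\<exists>t\<in>T. u t $ j > 0)}"

end

theory Submission
  imports Defs "Jordan_Normal_Form.DL_Rank_Submatrix"
begin


context vec_space begin

lemma mult_in_span_cols:
  assumes A: "A \<in> carrier_mat n nc" and x: "x \<in> carrier_vec nc"
  shows "A *\<^sub>v x \<in> span (set (cols A))"
proof -
  have cd: "\<forall>w \<in> set (cols A). dim_vec w = n" using A by (auto simp: cols_def)
  have "lincomb_list (\<lambda>i. x $ i) (cols A) = mat_of_cols n (cols A) *\<^sub>v vec (length (cols A)) (\<lambda>i. x $ i)"
    by (rule lincomb_list_as_mat_mult[OF cd])
  also have "\<dots> = A *\<^sub>v x" using A x by (auto intro!: arg_cong2[where f="(*\<^sub>v)"])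
  finally have "A *\<^sub>v x \<in> span_list (cols A)" unfolding span_list_def by (metis (mono_tags, lifting) mem_Collect_eq)
  moreover have "set (cols A) \<subseteq> carrier_vec n" using A cols_dim by blast
  ultimately show ?thesis using span_list_as_span by blast
qed

lemma surj_rank:
  assumes A: "A \<in> carrier_mat n nc" and s: "\<And>y. y \<in> carrier_vec n \<Longrightarrow> \<exists>x\<in>carrier_vec nc. A *\<^sub>v x = y"
  shows "rank A = n"
proof -
  have cs: "set (cols A) \<subseteq> carrier_vec n" using A cols_dim by blast
  have "span (set (cols A)) = carrier_vec n"
  proof
    show "span (set (cols A)) \<subseteq> carrier_vec n" using span_is_subset2[OF cs] by simp
    show "carrier_vec n \<subseteq> span (set (cols A))" using s mult_in_span_cols[OF A] by blast
  qed
  then have "span_vs (set (cols A)) = V" by simp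
  then show ?thesis unfolding rank_def using dim_is_n by simp
qed

lemma rank_surj:
  assumes A: "A \<in> carrier_mat n nc" and r: "rank A = n" and y: "y \<in> carrier_vec n"
  shows "\<exists>x\<in>carrier_vec nc. A *\<^sub>v x = y"
proof -
  obtain S where S: "maximal S (\<lambda>T. T \<subseteq> set (cols A) \<and> lin_indpt T)"
    using maximal_exists[of "(\<lambda>T. T \<subseteq> set (cols A) \<and> lin_indpt T)" "card (set (cols A))" "{}"]
    by (meson List.finite_set card_mono empty_iff empty_subsetI finite_lin_indpt2 rev_finite_subset)
  have cs: "set (cols A) \<subseteq> carrier_vec n" using A cols_dim by blast
  have cardS: "card S = n" using rank_card_indpt[OF A S] r by simp
  have Ssub: "S \<subseteq> set (cols A)" and li: "lin_indpt S" using S by (auto simp: maximal_def)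
  have finS: "finite S" using Ssub finite_subset by blast
  have "basis S" by (rule dim_li_is_basis) (use finS Ssub cs li cardS dim_is_n in auto)
  then have "span S = carrier_vec n" unfolding basis_def by simp
  moreover have "span S \<subseteq> span (set (cols A))" using span_is_monotone[OF Ssub] .
  ultimately have "y \<in> span_list (cols A)" using y span_list_as_span[OF cs] by auto
  then obtain c where yc: "y = lincomb_list c (cols A)" unfolding span_list_def by auto
  have cd: "\<forall>w \<in> set (cols A). dim_vec w = n" using A by (auto simp: cols_def)
  have "y = mat_of_cols n (cols A) *\<^sub>v vec (length (cols A)) c"
    using yc lincomb_list_as_mat_mult[OF cd] by simp
  also have "\<dots> = A *\<^sub>v vec nc c" using A mat_of_cols_cols[of A] by simp
  finally show ?thesis by auto
qed

end


context vec_space begin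

lemma indpt_rows_det:
  assumes A: "A \<in> carrier_mat n n" and d: "distinct (rows A)" and li: "lin_indpt (set (rows A))"
  shows "det A \<noteq> 0"
proof
  assume "det A = 0"
  then have "det (transpose_mat A) = 0" using det_transpose[OF A] by simp
  then obtain v where v: "v \<in> carrier_vec n" "v \<noteq> 0\<^sub>v n" "transpose_mat A *\<^sub>v v = 0\<^sub>v n"
    using det_0_iff_vec_prod_zero_field[of "transpose_mat A" n] A by auto
  have "lin_dep (set (cols (transpose_mat A)))"
    by (rule lin_depI[OF _ v]) (use A d in auto)
  then show False using li by simp
qed

lemma extend_indpt:
  assumes fU: "finite U"
    and units: "\<And>j. j < n \<Longrightarrow> \<exists>i\<in>U. R i = unit_vec n j"
    and RU: "R ` U \<subseteq> carrier_vec n"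
  shows "S \<subseteq> U \<Longrightarrow> inj_on R S \<Longrightarrow> lin_indpt (R ` S) \<Longrightarrow> card S \<le> n \<Longrightarrow>
     \<exists>J. S \<subseteq> J \<and> J \<subseteq> U \<and> card J = n \<and> inj_on R J \<and> lin_indpt (R ` J)"
proof (induction "n - card S" arbitrary: S)
  case 0
  then show ?case by auto
next
  case (Suc k)
  have lt: "card S < n" using Suc by linarith
  have RS: "R ` S \<subseteq> carrier_vec n" using Suc.prems(1) RU by auto
  have finS: "finite S" using Suc.prems(1) fU finite_subset by blast
  have "\<exists>j<n. unit_vec n j \<notin> span (R ` S)"
  proof (rule ccontr)
    assume "\<not> ?thesis"
    then have "set (unit_vecs n) \<subseteq> span (R ` S)" by (auto simp: unit_vecs_def)
    then have "span (set (unit_vecs n)) \<subseteq> span (R ` S)" using span_subsetI[OF RS] by blast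
    then have "span (R ` S) = carrier_vec n" using span_unit_vecs_is_carrier span_is_subset2[OF RS] by auto
    then have "card (R ` S) \<ge> n" using gen_ge_dim[of "R ` S"] finS RS dim_is_n by auto
    then show False using card_image[OF Suc.prems(2)] lt by simp
  qed
  then obtain j where j: "j < n" "unit_vec n j \<notin> span (R ` S)" by blast
  obtain i where i: "i \<in> U" "R i = unit_vec n j" using units[OF j(1)] by blast
  have niS: "R i \<notin> R ` S" using i j in_own_span[OF RS] by auto
  then have iS: "i \<notin> S" by auto
  have li2: "lin_indpt (R ` S \<union> {R i})"
    using lin_dep_iff_in_span[OF RS Suc.prems(3) _ niS] i j by auto
  have "\<exists>J. insert i S \<subseteq> J \<and> J \<subseteq> U \<and> card J = n \<and> inj_on R J \<and> lin_indpt (R ` J)"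
    apply (rule Suc.hyps(1))
    using Suc.hyps(2) iS finS Suc.prems i niS li2 lt by (auto simp: insert_commute)
  then show ?case by blast
qed

end


lemma pick_image:
  assumes "finite I" shows "pick I ` {..<card I} = I"
proof
  show "pick I ` {..<card I} \<subseteq> I"
  proof (rule image_subsetI)
    fix i assume "i \<in> {..<card I}"
    then have "i < card I" by simp
    then show "pick I i \<in> I" using pick_in_set by blast
  qed
  show "I \<subseteq> pick I ` {..<card I}"
  proof
    fix i assume i: "i \<in> I"
    have "{a\<in>I. a < i} \<subset> I" using i by auto
    then have "card {a\<in>I. a < i} < card I" using assms psubset_card_mono by blast
    then show "i \<in> pick I ` {..<card I}"
      by (rule_tac image_eqI[where x="card {a\<in>I. a < i}"]) (simp_all add: pick_card_in_set[OF i])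
  qed
qed

lemma sub_set_eq:
  assumes "tA \<in> carrier_mat q n" "I \<subseteq> {..<q}"
  shows "{i. i < dim_row tA \<and> i \<in> I} = I"
  using assms by auto

lemma sub_carrier:
  assumes "tA \<in> carrier_mat q n" "I \<subseteq> {..<q}"
  shows "submatrix tA I UNIV \<in> carrier_mat (card I) n"
proof (rule carrier_matI)
  show "dim_row (submatrix tA I UNIV) = card I"
    unfolding dim_submatrix sub_set_eq[OF assms] ..
  have "{j. j < dim_col tA \<and> j \<in> UNIV} = {..<n}" using assms by auto
  then show "dim_col (submatrix tA I UNIV) = n"
    unfolding dim_submatrix by simp
qed

lemma sub_row:
  assumes "tA \<in> carrier_mat q n" "I \<subseteq> {..<q}" "i < card I"
  shows "row (submatrix tA I UNIV) i = row tA (pick I i)"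
  using row_submatrix_UNIV[of i tA I] assms(3) unfolding sub_set_eq[OF assms(1,2)] by blast

lemma sub_rows_set:
  assumes "tA \<in> carrier_mat q n" "I \<subseteq> {..<q}"
  shows "set (rows (submatrix tA I UNIV)) = row tA ` I"
proof -
  have fI: "finite I" using assms(2) finite_subset by blast
  have "set (rows (submatrix tA I UNIV)) = (\<lambda>i. row (submatrix tA I UNIV) i) ` {..<card I}"
    using sub_carrier[OF assms] by (auto simp: rows_def)
  also have "\<dots> = (\<lambda>i. row tA (pick I i)) ` {..<card I}" using sub_row[OF assms] by auto
  also have "\<dots> = row tA ` (pick I ` {..<card I})" by auto
  finally show ?thesis using pick_image[OF fI] by simp
qed

lemma sub_rows_distinct:
  assumes "tA \<in> carrier_mat q n" "I \<subseteq> {..<q}"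
  shows "distinct (rows (submatrix tA I UNIV)) \<longleftrightarrow> inj_on (row tA) I"
proof -
  have fI: "finite I" using assms(2) finite_subset by blast
  have len: "length (rows (submatrix tA I UNIV)) = card I" using sub_carrier[OF assms] by simp
  have "distinct (rows (submatrix tA I UNIV)) \<longleftrightarrow> card (set (rows (submatrix tA I UNIV))) = card I"
    using len card_distinct[of "rows (submatrix tA I UNIV)"] distinct_card[of "rows (submatrix tA I UNIV)"] by auto
  also have "\<dots> \<longleftrightarrow> card (row tA ` I) = card I" using sub_rows_set[OF assms] by simp
  also have "\<dots> \<longleftrightarrow> inj_on (row tA) I" using inj_on_iff_eq_card[OF fI, of "row tA"] by simp
  finally show ?thesis .
qed

lemma tildeA_carrier: "tildeA m n p A \<in> carrier_mat (m + n + p) n"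
  by (simp add: tildeA_def)

lemma tildeA_unit: "j < n \<Longrightarrow> row (tildeA m n p A) (m + j) = unit_vec n j"
  by (rule eq_vecI) (simp_all add: tildeA_def unit_vec_def)



lemma card_less_pos:
  fixes I :: "nat set" assumes "finite I" "i \<in> I" shows "card {a\<in>I. a < i} < card I"
proof -
  have "i \<notin> {a\<in>I. a < i}" by simp
  then have "{a\<in>I. a < i} \<subset> I" using assms by blast
  then show ?thesis using assms psubset_card_mono by blast
qed

context vec_space begin

lemma li_card_le: "S \<subseteq> carrier_vec n \<Longrightarrow> lin_indpt S \<Longrightarrow> card S \<le> n"
  using li_le_dim(2)[of S] dim_is_n by simp

lemma full_row_rank_extend:
  fixes tA :: "'a mat"
  assumes tA: "tA \<in> carrier_mat q n"
    and units: "\<And>j. j < n \<Longrightarrow> \<exists>i<q. row tA i = unit_vec n j"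
    and Nsub: "N \<subseteq> {..<q}"
    and r: "vec_space.rank (card N) (submatrix tA N UNIV) = card N"
  shows "\<exists>J. N \<subseteq> J \<and> J \<subseteq> {..<q} \<and> card J = n \<and> det (submatrix tA J UNIV) \<noteq> 0"
proof -
  define M where "M = submatrix tA N UNIV"
  define k where "k = card N"
  have Mc: "M \<in> carrier_mat k n" unfolding M_def k_def by (rule sub_carrier[OF tA Nsub])
  have "\<forall>i. \<exists>x. i < k \<longrightarrow> x \<in> carrier_vec n \<and> M *\<^sub>v x = unit_vec k i"
  proof
    fix i
    show "\<exists>x. i < k \<longrightarrow> x \<in> carrier_vec n \<and> M *\<^sub>v x = unit_vec k i"
      using vec_space.rank_surj[OF Mc, of "unit_vec k i"] r unfolding M_def k_def by auto
  qed
  then obtain X where X: "\<And>i. i < k \<Longrightarrow> X i \<in> carrier_vec n \<and> M *\<^sub>v X i = unit_vec k i"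
    by metis
  have rowX: "row M i' \<bullet> X i = (if i' = i then 1 else 0)" if "i < k" "i' < k" for i i'
  proof -
    have "row M i' \<bullet> X i = (M *\<^sub>v X i) $ i'" using Mc that by simp
    also have "\<dots> = (if i' = i then 1 else 0)" using X[OF that(1)] that by (simp add: unit_vec_def)
    finally show ?thesis .
  qed
  have dist: "distinct (rows M)"
  proof (rule ccontr)
    assume "\<not> distinct (rows M)"
    then obtain i i' where ii: "i \<noteq> i'" "i < k" "i' < k" "rows M ! i = rows M ! i'"
      using Mc distinct_conv_nth[of "rows M"] by auto
    then have "row M i = row M i'" using Mc by simp
    then have "row M i \<bullet> X i = row M i' \<bullet> X i" by simp
    then show False using rowX[of i i] rowX[of i i'] ii by simp
  qed
  have MT: "transpose_mat M \<in> carrier_mat n k" using Mc by simp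
  have li: "lin_indpt (set (rows M))"
  proof
    assume ld: "lin_dep (set (rows M))"
    obtain v where v: "v \<in> carrier_vec k" "v \<noteq> 0\<^sub>v k" "transpose_mat M *\<^sub>v v = 0\<^sub>v n"
      using lin_depE[OF MT] ld dist by auto
    obtain i where i: "i < k" "v $ i \<noteq> 0" using v(1,2) by (metis eq_vecI carrier_vecD index_zero_vec)
    have "(transpose_mat M *\<^sub>v v) \<bullet> X i = v \<bullet> (M *\<^sub>v X i)"
      by (rule transpose_vec_mult_scalar[OF Mc _ v(1)]) (use X[OF i(1)] in auto)
    also have "\<dots> = v \<bullet> unit_vec k i" using X[OF i(1)] by simp
    also have "\<dots> = v $ i" using v(1) i(1) by simp
    finally have "v $ i = 0" using v(3) X[OF i(1)] by simp
    then show False using i by simp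
  qed
  have inj: "inj_on (row tA) N" using dist sub_rows_distinct[OF tA Nsub] unfolding M_def by simp
  have liN: "lin_indpt (row tA ` N)" using li sub_rows_set[OF tA Nsub] unfolding M_def by simp
  have RU: "row tA ` {..<q} \<subseteq> carrier_vec n" using tA by auto
  have cN: "card N \<le> n"
    using li_card_le[OF _ liN] card_image[OF inj] RU Nsub by auto
  obtain J where J: "N \<subseteq> J" "J \<subseteq> {..<q}" "card J = n" "inj_on (row tA) J" "lin_indpt (row tA ` J)"
    using extend_indpt[of "{..<q}" "row tA" N, OF _ _ RU Nsub inj liN cN] units by blast
  have AJ: "submatrix tA J UNIV \<in> carrier_mat n n" using sub_carrier[OF tA J(2)] J(3) by simp
  have "det (submatrix tA J UNIV) \<noteq> 0"
    by (rule indpt_rows_det[OF AJ])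
      (use sub_rows_distinct[OF tA J(2)] sub_rows_set[OF tA J(2)] J in auto)
  then show ?thesis using J by blast
qed

end


theorem theorem3:
  fixes m n p r :: nat and A :: "real mat" and b :: "real vec"
    and T :: "'t set" and D :: "'t \<Rightarrow> real mat" and d0 :: "'t \<Rightarrow> real vec"
    and \<alpha> :: "real vec" and \<beta> :: real and u v :: "'t \<Rightarrow> real vec"
  assumes "A \<in> carrier_mat m n" and "b \<in> carrier_vec m" and "p \<le> n"
    and "\<forall>i<m. \<forall>j<n. A $$ (i, j) \<in> \<rat>" and "\<forall>i<m. b $ i \<in> \<rat>"
    and "finite T"
    and "\<forall>t\<in>T. D t \<in> carrier_mat r n \<and> d0 t \<in> carrier_vec r"
    and "\<forall>t\<in>T. (\<forall>i<r. \<forall>j<n. D t $$ (i, j) \<in> \<rat>) \<and> (\<forall>i<r. d0 t $ i \<in> \<rat>)"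
    and "cglp_feasible (tildeA m n p A) (tildeb m n p b) T r D d0 \<alpha> \<beta> u v"
    and "cglp_basic (tildeA m n p A) (tildeb m n p b) T r D d0 \<alpha> \<beta> u v"
  shows "cglp_regular (tildeA m n p A) T u \<longleftrightarrow>
         vec_space.rank (card (Nset (m + n + p) T u))
            (submatrix (tildeA m n p A) (Nset (m + n + p) T u) UNIV)
           = card (Nset (m + n + p) T u)"
proof -
  define q where "q = m + n + p"
  define tA where "tA = tildeA m n p A"
  define N where "N = Nset q T u"
  have tA: "tA \<in> carrier_mat q n" unfolding tA_def q_def by (rule tildeA_carrier)
  have Nsub: "N \<subseteq> {..<q}" unfolding N_def Nset_def by auto
  have fN: "finite N" using Nsub finite_subset by blast
  define M where "M = submatrix tA N UNIV"
  have Mc: "M \<in> carrier_mat (card N) n" unfolding M_def by (rule sub_carrier[OF tA Nsub])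
  have uge: "\<And>t i. t \<in> T \<Longrightarrow> i < q \<Longrightarrow> u t $ i \<ge> 0"
    using assms(9) tA unfolding cglp_feasible_def tA_def by auto
  have units: "\<And>j. j < n \<Longrightarrow> \<exists>i<q. row tA i = unit_vec n j"
    using tildeA_unit unfolding tA_def q_def by (metis add_less_cancel_left less_add_same_cancel1 add.commute trans_less_add1)
  have "cglp_regular tA T u \<longleftrightarrow> vec_space.rank (card N) M = card N"
  proof
    assume "cglp_regular tA T u"
    then obtain J where J: "J \<subseteq> {..<q}" "card J = n" "det (submatrix tA J UNIV) \<noteq> 0"
      "\<And>t j. t \<in> T \<Longrightarrow> j < q \<Longrightarrow> j \<notin> J \<Longrightarrow> u t $ j = 0"
      unfolding cglp_regular_def using tA by auto
    have NJ: "N \<subseteq> J"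
    proof
      fix j assume "j \<in> N"
      then obtain t where "j < q" "t \<in> T" "u t $ j > 0" unfolding N_def Nset_def by auto
      then show "j \<in> J" using J(4)[of t j] by force
    qed
    have fJ: "finite J" using J(1) finite_subset by blast
    define AJ where "AJ = submatrix tA J UNIV"
    have AJc: "AJ \<in> carrier_mat n n" using sub_carrier[OF tA J(1)] J(2) unfolding AJ_def by simp
    have rAJ: "vec_space.rank n AJ = n"
      using vec_space.low_rank_det_zero[OF AJc] J(3) unfolding AJ_def by simp
    show "vec_space.rank (card N) M = card N"
    proof (rule vec_space.surj_rank[OF Mc])
      fix y :: "real vec" assume y: "y \<in> carrier_vec (card N)"
      define z where "z = vec n (\<lambda>j. if pick J j \<in> N then y $ card {a\<in>N. a < pick J j} else 0)"
      obtain x where x: "x \<in> carrier_vec n" "AJ *\<^sub>v x = z"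
        using vec_space.rank_surj[OF AJc rAJ, of z] unfolding z_def by auto
      show "\<exists>x\<in>carrier_vec n. M *\<^sub>v x = y"
      proof (intro bexI[OF _ x(1)] eq_vecI)
        show "dim_vec (M *\<^sub>v x) = dim_vec y" using Mc y by simp
        fix i assume "i < dim_vec y"
        then have i: "i < card N" using y by simp
        define l where "l = card {a\<in>J. a < pick N i}"
        have pN: "pick N i \<in> N" using pick_in_set i by blast
        then have pJ: "pick N i \<in> J" using NJ by blast
        have pl: "pick J l = pick N i" unfolding l_def using pick_card_in_set[OF pJ] .
        have ll: "l < n" unfolding l_def using card_less_pos[OF fJ pJ] J(2) by simp
        have "(M *\<^sub>v x) $ i = row M i \<bullet> x" using Mc i by simp
        also have "\<dots> = row tA (pick N i) \<bullet> x" unfolding M_def using sub_row[OF tA Nsub i] by simp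
        also have "\<dots> = row AJ l \<bullet> x" unfolding AJ_def using sub_row[OF tA J(1), of l] ll J(2) pl by simp
        also have "\<dots> = (AJ *\<^sub>v x) $ l" using AJc ll by simp
        also have "\<dots> = y $ card {a\<in>N. a < pick N i}" using x(2) ll pl pN unfolding z_def by simp
        also have "\<dots> = y $ i" using card_pick[of i N] i by simp
        finally show "(M *\<^sub>v x) $ i = y $ i" .
      qed
    qed
  next
    assume r: "vec_space.rank (card N) M = card N"
    obtain J where J: "N \<subseteq> J" "J \<subseteq> {..<q}" "card J = n" "det (submatrix tA J UNIV) \<noteq> 0"
      using vec_space.full_row_rank_extend[OF tA units Nsub] r unfolding M_def by blast
    show "cglp_regular tA T u"
      unfolding cglp_regular_def
    proof (intro exI[of _ J] conjI ballI allI impI)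
      show "J \<subseteq> {..<dim_row tA}" using J tA by simp
      show "card J = dim_col tA" using J tA by simp
      show "det (submatrix tA J UNIV) \<noteq> 0" using J by simp
      fix t j assume t: "t \<in> T" and j: "j < dim_row tA" "j \<notin> J"
      then have "j \<notin> N" "j < q" using J tA by auto
      then have "\<not> u t $ j > 0" using t unfolding N_def Nset_def by auto
      then show "u t $ j = 0" using uge[OF t \<open>j < q\<close>] by simp
    qed
  qed
  then show ?thesis unfolding tA_def N_def M_def q_def .
qed


end
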